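(* Let $p$ be a prime, $k$ an integer with $3\le k\le p-1$, and $A\subseteq\mathbb{Z}/p\mathbb{Z}$ with $|A|\ge k+2$. Let \[ S_k(A)=\{a_1+a_2+k a_3 : a_1,a_2,a_3\in A \text{ pairwise distinct}\}. \] Then: (i) if $|A|\le (p+6)/3$, then $|S_k(A)|\ge 3|A|-6$; (ii) if $|A|=(p+7)/3$, then $|S_k(A)|\ge p-2$; (iii) if $|A|\ge (p+8)/3$, then $S_k(A)=\mathbb{Z}/p\mathbb{Z}$.
   Context: Here $k a_3$ denotes the $k$-fold multiple of $a_3$ in $\mathbb{Z}/p\mathbb{Z}$. *)

theory Defs
  imports "HOL-Computational_Algebra.Primes"
begin

text \<open>Z/pZ is represented by the residues {0..<p} (natural numbers); arithmetic is mod p.\<close>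

definition Sk :: "nat \<Rightarrow> nat \<Rightarrow> nat set \<Rightarrow> nat set" where
  "Sk p k A = {(a1 + a2 + k * a3) mod p | a1 a2 a3.
       a1 \<in> A \<and> a2 \<in> A \<and> a3 \<in> A \<and> a1 \<noteq> a2 \<and> a1 \<noteq> a3 \<and> a2 \<noteq> a3}"

end

theory Submission imports Defs "HOL-Computational_Algebra.Polynomial" begin

definition Dsum :: "'a::field set \<Rightarrow> nat \<Rightarrow> 'a" where
  "Dsum X e = (\<Sum>x\<in>X. x^e / (\<Prod>y\<in>X-{x}. (x - y)))"

lemma Dsum_rec:
  assumes "finite X" "z \<in> X"
  shows "Dsum X (Suc e) = z * Dsum X e + Dsum (X - {z}) e"
proof -
  have "Dsum X (Suc e) - z * Dsum X e = (\<Sum>x\<in>X. x^e * (x - z) / (\<Prod>y\<in>X-{x}. (x - y)))"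
    unfolding Dsum_def sum_distrib_left sum_subtractf[symmetric]
    by (rule sum.cong) (auto simp: algebra_simps diff_divide_distrib)
  also have "\<dots> = (\<Sum>x\<in>X-{z}. x^e * (x - z) / (\<Prod>y\<in>X-{x}. (x - y)))"
    using assms by (simp add: sum.remove)
  also have "\<dots> = Dsum (X - {z}) e"
    unfolding Dsum_def
  proof (rule sum.cong)
    fix x assume x: "x \<in> X - {z}"
    have "(\<Prod>y\<in>X-{x}. (x - y)) = (x - z) * (\<Prod>y\<in>X-{x}-{z}. (x - y))"
      using assms x by (subst prod.remove[of _ z]) auto
    moreover have "X - {x} - {z} = X - {z} - {x}" by auto
    ultimately show "x^e * (x - z) / (\<Prod>y\<in>X-{x}. (x - y)) = x^e / (\<Prod>y\<in>X-{z}-{x}. (x - y))"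
      using x by simp
  qed simp
  finally show ?thesis by (simp add: algebra_simps)
qed

lemma Dsum_main:
  "finite X \<Longrightarrow> card X = Suc n \<Longrightarrow> (\<forall>e<n. Dsum X e = 0) \<and> Dsum X n = 1"
proof (induction n arbitrary: X)
  case 0
  then obtain z where "X = {z}" by (auto simp: card_Suc_eq)
  then show ?case by (simp add: Dsum_def)
next
  case (Suc n)
  from Suc.prems obtain z1 z2 where z: "z1 \<in> X" "z2 \<in> X" "z1 \<noteq> z2"
    by (auto simp: card_Suc_eq)
  have c1: "card (X - {z1}) = Suc n" "finite (X - {z1})" using Suc.prems z by auto
  have c2: "card (X - {z2}) = Suc n" "finite (X - {z2})" using Suc.prems z by auto
  note IH1 = Suc.IH[OF c1(2) c1(1)] and IH2 = Suc.IH[OF c2(2) c2(1)]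
  have Z: "Dsum X e = 0" if "e \<le> n" for e
  proof -
    have "Dsum X (Suc e) = z1 * Dsum X e + Dsum (X - {z1}) e"
         "Dsum X (Suc e) = z2 * Dsum X e + Dsum (X - {z2}) e"
      using Dsum_rec Suc.prems z by blast+
    moreover have "Dsum (X - {z1}) e = Dsum (X - {z2}) e"
      using IH1 IH2 that by (cases "e = n") auto
    ultimately have "z1 * Dsum X e = z2 * Dsum X e" by (metis add_right_cancel)
    then show ?thesis using z by (simp add: mult_cancel_right)
  qed
  have "Dsum X (Suc n) = z1 * Dsum X n + Dsum (X - {z1}) n"
    using Dsum_rec Suc.prems z by blast
  then have "Dsum X (Suc n) = 1" using Z IH1 by simp
  then show ?case using Z by (simp add: less_Suc_eq_le)
qed


definition phi :: "int set \<Rightarrow> int \<Rightarrow> int" where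
  "phi X x = (\<Prod>y\<in>X-{x}. (x - y))"
definition uw :: "int set \<Rightarrow> int \<Rightarrow> int" where
  "uw X x = (\<Prod>x'\<in>X-{x}. phi X x')"
definition VV :: "int set \<Rightarrow> int" where
  "VV X = (\<Prod>x'\<in>X. phi X x')"
definition PP :: "int set \<Rightarrow> nat \<Rightarrow> int" where
  "PP X e = (\<Sum>x\<in>X. x^e * uw X x)"

lemma phi_nz: "finite X \<Longrightarrow> phi X x \<noteq> 0"
  unfolding phi_def by (auto simp: prod_zero_iff)

lemma PP_rat:
  assumes "finite X"
  shows "(of_int (PP X e) :: rat) = of_int (VV X) * Dsum (of_int ` X) e"
proof -
  have inj: "inj_on (of_int :: int \<Rightarrow> rat) S" for S by (auto simp: inj_on_def)
  have ph: "(of_int (phi X x) :: rat) = (\<Prod>y\<in>of_int ` X - {of_int x}. (of_int x - y))" if "x \<in> X" for x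
  proof -
    have "of_int ` X - {(of_int x :: rat)} = of_int ` (X - {x})" by auto
    then show ?thesis unfolding phi_def using inj
      by (simp add: prod.reindex)
  qed
  have u: "(of_int (uw X x) :: rat) = of_int (VV X) / of_int (phi X x)" if "x \<in> X" for x
  proof -
    have "VV X = phi X x * uw X x" unfolding VV_def uw_def using assms that by (simp add: prod.remove)
    then show ?thesis using phi_nz[OF assms, of x] by simp
  qed
  have "(of_int (PP X e) :: rat) = (\<Sum>x\<in>X. of_int x ^ e * (of_int (VV X) / of_int (phi X x)))"
    unfolding PP_def by (simp add: u)
  also have "\<dots> = of_int (VV X) * (\<Sum>x\<in>X. of_int x ^ e / (\<Prod>y\<in>of_int ` X - {of_int x}. (of_int x - y)))"
    by (simp add: sum_distrib_left ph mult.commute)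
  also have "\<dots> = of_int (VV X) * Dsum (of_int ` X) e"
    unfolding Dsum_def using inj by (simp add: sum.reindex)
  finally show ?thesis .
qed

lemma PP_main:
  assumes "finite X" "card X = Suc n"
  shows "e < n \<Longrightarrow> PP X e = 0" and "PP X n = VV X"
proof -
  have inj: "inj_on (of_int :: int \<Rightarrow> rat) X" by (auto simp: inj_on_def)
  have f: "finite ((of_int :: int \<Rightarrow> rat) ` X)" "card ((of_int :: int \<Rightarrow> rat) ` X) = Suc n"
    using assms inj by (auto simp: card_image)
  note D = Dsum_main[OF f]
  show "e < n \<Longrightarrow> PP X e = 0"
  proof -
    assume "e < n"
    then have "(of_int (PP X e) :: rat) = 0" using PP_rat[OF assms(1)] D by simp
    then show ?thesis by simp
  qed
  have "(of_int (PP X n) :: rat) = of_int (VV X)" using PP_rat[OF assms(1)] D by simp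
  then show "PP X n = VV X" by simp
qed


definition box :: "int set \<Rightarrow> int set \<Rightarrow> int set \<Rightarrow> (int \<Rightarrow> int \<Rightarrow> int \<Rightarrow> int) \<Rightarrow> int" where
  "box X1 X2 X3 g = (\<Sum>x1\<in>X1. \<Sum>x2\<in>X2. \<Sum>x3\<in>X3. g x1 x2 x3 * uw X1 x1 * uw X2 x2 * uw X3 x3)"

lemma box_mono: "box X1 X2 X3 (\<lambda>x1 x2 x3. x1^e1 * x2^e2 * x3^e3) = PP X1 e1 * PP X2 e2 * PP X3 e3"
proof -
  have "box X1 X2 X3 (\<lambda>x1 x2 x3. x1^e1 * x2^e2 * x3^e3) =
     (\<Sum>x1\<in>X1. \<Sum>x2\<in>X2. \<Sum>x3\<in>X3. (x1^e1 * uw X1 x1) * ((x2^e2 * uw X2 x2) * (x3^e3 * uw X3 x3)))"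
    unfolding box_def by (simp add: mult_ac)
  also have "\<dots> = PP X1 e1 * (PP X2 e2 * PP X3 e3)"
    unfolding PP_def by (simp only: sum_distrib_left[symmetric] sum_distrib_right[symmetric])
  finally show ?thesis by (simp add: mult_ac)
qed

lemma box_sum: "box X1 X2 X3 (\<lambda>x1 x2 x3. \<Sum>j\<in>J. G j x1 x2 x3) = (\<Sum>j\<in>J. box X1 X2 X3 (G j))"
proof -
  have "box X1 X2 X3 (\<lambda>x1 x2 x3. \<Sum>j\<in>J. G j x1 x2 x3) =
    (\<Sum>x1\<in>X1. \<Sum>x2\<in>X2. \<Sum>x3\<in>X3. \<Sum>j\<in>J. G j x1 x2 x3 * uw X1 x1 * uw X2 x2 * uw X3 x3)"
    unfolding box_def by (simp add: sum_distrib_right)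
  also have "\<dots> = (\<Sum>x1\<in>X1. \<Sum>x2\<in>X2. \<Sum>j\<in>J. \<Sum>x3\<in>X3. G j x1 x2 x3 * uw X1 x1 * uw X2 x2 * uw X3 x3)"
    by (simp add: sum.swap[of _ J])
  also have "\<dots> = (\<Sum>x1\<in>X1. \<Sum>j\<in>J. \<Sum>x2\<in>X2. \<Sum>x3\<in>X3. G j x1 x2 x3 * uw X1 x1 * uw X2 x2 * uw X3 x3)"
    by (simp add: sum.swap[of _ J])
  also have "\<dots> = (\<Sum>j\<in>J. \<Sum>x1\<in>X1. \<Sum>x2\<in>X2. \<Sum>x3\<in>X3. G j x1 x2 x3 * uw X1 x1 * uw X2 x2 * uw X3 x3)"
    by (rule sum.swap)
  finally show ?thesis unfolding box_def .
qed

lemma box_cmult: "box X1 X2 X3 (\<lambda>x1 x2 x3. c * G x1 x2 x3) = c * box X1 X2 X3 G"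
  unfolding box_def by (simp add: sum_distrib_left mult_ac)

lemma box_add: "box X1 X2 X3 (\<lambda>x1 x2 x3. F x1 x2 x3 + G x1 x2 x3) = box X1 X2 X3 F + box X1 X2 X3 G"
  unfolding box_def by (simp add: sum.distrib algebra_simps)

lemma box_diff: "box X1 X2 X3 (\<lambda>x1 x2 x3. F x1 x2 x3 - G x1 x2 x3) = box X1 X2 X3 F - box X1 X2 X3 G"
  unfolding box_def by (simp add: sum_subtractf algebra_simps)

lemma trinom:
  "(x1 + x2 + k * x3 :: int) ^ t = (\<Sum>l\<le>t. \<Sum>i\<le>t-l. int ((t choose l) * ((t-l) choose i)) * k^l * (x1^i * x2^(t-l-i) * x3^l))"
proof -
  have "(x1 + x2 + k * x3) ^ t = (k * x3 + (x1 + x2)) ^ t" by (simp add: add_ac)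
  also have "\<dots> = (\<Sum>l\<le>t. of_nat (t choose l) * (k*x3)^l * (x1+x2)^(t-l))"
    by (rule binomial_ring)
  also have "\<dots> = (\<Sum>l\<le>t. of_nat (t choose l) * (k*x3)^l * (\<Sum>i\<le>t-l. of_nat ((t-l) choose i) * x1^i * x2^(t-l-i)))"
    by (simp add: binomial_ring)
  also have "\<dots> = (\<Sum>l\<le>t. \<Sum>i\<le>t-l. int ((t choose l) * ((t-l) choose i)) * k^l * (x1^i * x2^(t-l-i) * x3^l))"
    by (simp add: sum_distrib_left power_mult_distrib mult_ac)
  finally show ?thesis .
qed

lemma box_expand:
  "box X1 X2 X3 (\<lambda>x1 x2 x3. x1^f1 * x2^f2 * x3^f3 * (x1 + x2 + k * x3)^t) =
   (\<Sum>l\<le>t. \<Sum>i\<le>t-l. int ((t choose l) * ((t-l) choose i)) * k^l *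
       (PP X1 (f1+i) * PP X2 (f2+(t-l-i)) * PP X3 (f3+l)))"
proof -
  have "box X1 X2 X3 (\<lambda>x1 x2 x3. x1^f1 * x2^f2 * x3^f3 * (x1 + x2 + k * x3)^t) =
    box X1 X2 X3 (\<lambda>x1 x2 x3. \<Sum>l\<le>t. \<Sum>i\<le>t-l. int ((t choose l) * ((t-l) choose i)) * k^l *
       (x1^(f1+i) * x2^(f2+(t-l-i)) * x3^(f3+l)))"
    unfolding trinom sum_distrib_left
    apply (rule arg_cong[where f="box X1 X2 X3"])
    apply (intro ext sum.cong refl)
    apply (simp only: power_add mult_ac)
    done
  also have "\<dots> = (\<Sum>l\<le>t. \<Sum>i\<le>t-l. int ((t choose l) * ((t-l) choose i)) * k^l *
       (PP X1 (f1+i) * PP X2 (f2+(t-l-i)) * PP X3 (f3+l)))"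
    by (simp add: box_sum box_cmult box_mono)
  finally show ?thesis .
qed

lemma PP_prod_zero:
  assumes "finite X1" "card X1 = Suc c1" "finite X2" "card X2 = Suc c2" "finite X3" "card X3 = Suc c3"
    and "e1 + e2 + e3 < c1 + c2 + c3"
  shows "PP X1 e1 * PP X2 e2 * PP X3 e3 = 0"
proof -
  have "e1 < c1 \<or> e2 < c2 \<or> e3 < c3" using assms(7) by linarith
  then show ?thesis using PP_main(1)[OF assms(1,2)] PP_main(1)[OF assms(3,4)] PP_main(1)[OF assms(5,6)]
    by auto
qed

lemma PP_prod_eq:
  assumes "finite X1" "card X1 = Suc c1" "finite X2" "card X2 = Suc c2" "finite X3" "card X3 = Suc c3"
    and "e1 + e2 + e3 = c1 + c2 + c3"
  shows "PP X1 e1 * PP X2 e2 * PP X3 e3 = (if e1 = c1 \<and> e3 = c3 then VV X1 * VV X2 * VV X3 else 0)"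
proof (cases "e1 = c1 \<and> e3 = c3")
  case True
  then have "e2 = c2" using assms(7) by simp
  then show ?thesis using True PP_main(2)[OF assms(1,2)] PP_main(2)[OF assms(3,4)] PP_main(2)[OF assms(5,6)]
    by simp
next
  case False
  then have "e1 < c1 \<or> e2 < c2 \<or> e3 < c3" using assms(7) by linarith
  then show ?thesis using False PP_main(1)[OF assms(1,2)] PP_main(1)[OF assms(3,4)] PP_main(1)[OF assms(5,6)]
    by auto
qed

lemma box_vanish:
  assumes "finite X1" "card X1 = Suc c1" "finite X2" "card X2 = Suc c2" "finite X3" "card X3 = Suc c3"
    and "f1 + f2 + f3 + t < c1 + c2 + c3"
  shows "box X1 X2 X3 (\<lambda>x1 x2 x3. x1^f1 * x2^f2 * x3^f3 * (x1 + x2 + k * x3)^t) = 0"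
  unfolding box_expand
proof (intro sum.neutral ballI)
  fix l i assume "l \<in> {..t}" "i \<in> {..t-l}"
  then have "(f1+i) + (f2+(t-l-i)) + (f3+l) < c1 + c2 + c3" using assms(7) by auto
  then have "PP X1 (f1+i) * PP X2 (f2+(t-l-i)) * PP X3 (f3+l) = 0"
    using PP_prod_zero[OF assms(1-6)] by blast
  then show "int ((t choose l) * ((t-l) choose i)) * k^l *
       (PP X1 (f1+i) * PP X2 (f2+(t-l-i)) * PP X3 (f3+l)) = 0" by simp
qed

lemma box_top:
  assumes "finite X1" "card X1 = Suc c1" "finite X2" "card X2 = Suc c2" "finite X3" "card X3 = Suc c3"
    and "f1 + f2 + f3 + t = c1 + c2 + c3" and "f1 \<le> c1" "f2 \<le> c2" "f3 \<le> c3"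
  shows "box X1 X2 X3 (\<lambda>x1 x2 x3. x1^f1 * x2^f2 * x3^f3 * (x1 + x2 + k * x3)^t) =
     int ((t choose (c3-f3)) * ((t-(c3-f3)) choose (c1-f1))) * k^(c3-f3) * (VV X1 * VV X2 * VV X3)"
proof -
  let ?V = "VV X1 * VV X2 * VV X3"
  have T: "int ((t choose l) * ((t-l) choose i)) * k^l *
       (PP X1 (f1+i) * PP X2 (f2+(t-l-i)) * PP X3 (f3+l)) =
       (if l = c3 - f3 then (if i = c1 - f1 then int ((t choose l) * ((t-l) choose i)) * k^l * ?V else 0) else 0)"
    if "l \<le> t" "i \<le> t - l" for l i
  proof -
    have "(f1+i) + (f2+(t-l-i)) + (f3+l) = c1 + c2 + c3" using assms(7) that by auto
    note E = PP_prod_eq[OF assms(1-6) this]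
    have "(f1 + i = c1 \<and> f3 + l = c3) = (l = c3 - f3 \<and> i = c1 - f1)" using assms(8-10) by auto
    then show ?thesis using E by auto
  qed
  have "box X1 X2 X3 (\<lambda>x1 x2 x3. x1^f1 * x2^f2 * x3^f3 * (x1 + x2 + k * x3)^t) =
     (\<Sum>l\<le>t. (if l = c3 - f3 then (\<Sum>i\<le>t-l. (if i = c1 - f1 then int ((t choose l) * ((t-l) choose i)) * k^l * ?V else 0)) else 0))"
    unfolding box_expand
  proof (intro sum.cong refl)
    fix l assume l: "l \<in> {..t}"
    have "(\<Sum>i\<le>t-l. int ((t choose l) * ((t-l) choose i)) * k^l *
       (PP X1 (f1+i) * PP X2 (f2+(t-l-i)) * PP X3 (f3+l))) =
      (\<Sum>i\<le>t-l. (if l = c3 - f3 then (if i = c1 - f1 then int ((t choose l) * ((t-l) choose i)) * k^l * ?V else 0) else 0))"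
      by (rule sum.cong) (use l T in auto)
    then show "(\<Sum>i\<le>t-l. int ((t choose l) * ((t-l) choose i)) * k^l *
       (PP X1 (f1+i) * PP X2 (f2+(t-l-i)) * PP X3 (f3+l))) =
      (if l = c3 - f3 then (\<Sum>i\<le>t-l. (if i = c1 - f1 then int ((t choose l) * ((t-l) choose i)) * k^l * ?V else 0)) else 0)"
      by (cases "l = c3 - f3") simp_all
  qed
  also have "\<dots> = int ((t choose (c3-f3)) * ((t-(c3-f3)) choose (c1-f1))) * k^(c3-f3) * ?V"
  proof -
    have "c3 - f3 \<le> t" "c1 - f1 \<le> t - (c3 - f3)" using assms(7-10) by linarith+
    then show ?thesis by (simp add: sum.delta)
  qed
  finally show ?thesis .
qed

lemma box_top0:
  assumes "finite X1" "card X1 = Suc c1" "finite X2" "card X2 = Suc c2" "finite X3" "card X3 = Suc c3"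
    and "f1 + f2 + f3 + t = c1 + c2 + c3" and "\<not> (f1 \<le> c1 \<and> f2 \<le> c2 \<and> f3 \<le> c3)"
  shows "box X1 X2 X3 (\<lambda>x1 x2 x3. x1^f1 * x2^f2 * x3^f3 * (x1 + x2 + k * x3)^t) = 0"
  unfolding box_expand
proof (intro sum.neutral ballI)
  fix l i assume "l \<in> {..t}" "i \<in> {..t-l}"
  then have s: "(f1+i) + (f2+(t-l-i)) + (f3+l) = c1 + c2 + c3" using assms(7) by auto
  have n: "\<not> (f1 + i = c1 \<and> f3 + l = c3)" using s assms(8) by auto
  have "PP X1 (f1+i) * PP X2 (f2+(t-l-i)) * PP X3 (f3+l) = 0"
    using PP_prod_eq[OF assms(1-6) s] if_not_P[OF n] by metis
  then show "int ((t choose l) * ((t-l) choose i)) * k^l *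
       (PP X1 (f1+i) * PP X2 (f2+(t-l-i)) * PP X3 (f3+l)) = 0" by simp
qed

definition tm :: "nat \<Rightarrow> nat \<Rightarrow> nat \<Rightarrow> int \<Rightarrow> nat \<Rightarrow> nat \<Rightarrow> nat \<Rightarrow> nat \<Rightarrow> int" where
  "tm c1 c2 c3 k t f1 f2 f3 = (if f1 \<le> c1 \<and> f2 \<le> c2 \<and> f3 \<le> c3 then
      int ((t choose (c3-f3)) * ((t-(c3-f3)) choose (c1-f1))) * k^(c3-f3) else 0)"

lemma box_mon:
  assumes "finite X1" "card X1 = Suc c1" "finite X2" "card X2 = Suc c2" "finite X3" "card X3 = Suc c3"
    and "f1 + f2 + f3 + t = c1 + c2 + c3"
  shows "box X1 X2 X3 (\<lambda>x1 x2 x3. x1^f1 * x2^f2 * x3^f3 * (x1 + x2 + k * x3)^t) =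
    tm c1 c2 c3 k t f1 f2 f3 * (VV X1 * VV X2 * VV X3)"
  using box_top[OF assms] box_top0[OF assms] unfolding tm_def by auto

definition Cc :: "nat \<Rightarrow> nat \<Rightarrow> nat \<Rightarrow> int \<Rightarrow> nat \<Rightarrow> int" where
  "Cc c1 c2 c3 k t = tm c1 c2 c3 k t 2 1 0 - tm c1 c2 c3 k t 2 0 1 - tm c1 c2 c3 k t 1 2 0
     + tm c1 c2 c3 k t 1 0 2 + tm c1 c2 c3 k t 0 2 1 - tm c1 c2 c3 k t 0 1 2"

abbreviation hh :: "int \<Rightarrow> int \<Rightarrow> int \<Rightarrow> int" where
  "hh x1 x2 x3 \<equiv> (x1 - x2) * (x1 - x3) * (x2 - x3)"

lemma box_h_split:
  "box X1 X2 X3 (\<lambda>x1 x2 x3. hh x1 x2 x3 * (x1 + x2 + k * x3)^t) =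
     box X1 X2 X3 (\<lambda>x1 x2 x3. x1^2 * x2^1 * x3^0 * (x1 + x2 + k * x3)^t)
   - box X1 X2 X3 (\<lambda>x1 x2 x3. x1^2 * x2^0 * x3^1 * (x1 + x2 + k * x3)^t)
   - box X1 X2 X3 (\<lambda>x1 x2 x3. x1^1 * x2^2 * x3^0 * (x1 + x2 + k * x3)^t)
   + box X1 X2 X3 (\<lambda>x1 x2 x3. x1^1 * x2^0 * x3^2 * (x1 + x2 + k * x3)^t)
   + box X1 X2 X3 (\<lambda>x1 x2 x3. x1^0 * x2^2 * x3^1 * (x1 + x2 + k * x3)^t)
   - box X1 X2 X3 (\<lambda>x1 x2 x3. x1^0 * x2^1 * x3^2 * (x1 + x2 + k * x3)^t)"
proof -
  have "(\<lambda>x1 x2 x3. hh x1 x2 x3 * (x1 + x2 + k * x3)^t) =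
    (\<lambda>x1 x2 x3. x1^2 * x2^1 * x3^0 * (x1 + x2 + k * x3)^t
     - x1^2 * x2^0 * x3^1 * (x1 + x2 + k * x3)^t
     - x1^1 * x2^2 * x3^0 * (x1 + x2 + k * x3)^t
     + x1^1 * x2^0 * x3^2 * (x1 + x2 + k * x3)^t
     + x1^0 * x2^2 * x3^1 * (x1 + x2 + k * x3)^t
     - x1^0 * x2^1 * x3^2 * (x1 + x2 + k * x3)^t)"
    by (intro ext) (simp add: algebra_simps power2_eq_square)
  then show ?thesis by (simp only: box_add box_diff)
qed

lemma box_h:
  assumes "finite X1" "card X1 = Suc c1" "finite X2" "card X2 = Suc c2" "finite X3" "card X3 = Suc c3"
  shows "t + 3 < c1 + c2 + c3 \<Longrightarrow> box X1 X2 X3 (\<lambda>x1 x2 x3. hh x1 x2 x3 * (x1 + x2 + k * x3)^t) = 0"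
    and "t + 3 = c1 + c2 + c3 \<Longrightarrow> box X1 X2 X3 (\<lambda>x1 x2 x3. hh x1 x2 x3 * (x1 + x2 + k * x3)^t)
          = Cc c1 c2 c3 k t * (VV X1 * VV X2 * VV X3)"
proof -
  assume "t + 3 < c1 + c2 + c3"
  then show "box X1 X2 X3 (\<lambda>x1 x2 x3. hh x1 x2 x3 * (x1 + x2 + k * x3)^t) = 0"
    unfolding box_h_split
    using box_vanish[OF assms, of 2 1 0 t k] box_vanish[OF assms, of 2 0 1 t k] box_vanish[OF assms, of 1 2 0 t k]
      box_vanish[OF assms, of 1 0 2 t k] box_vanish[OF assms, of 0 2 1 t k] box_vanish[OF assms, of 0 1 2 t k]
    by simp
next
  assume a: "t + 3 = c1 + c2 + c3"
  show "box X1 X2 X3 (\<lambda>x1 x2 x3. hh x1 x2 x3 * (x1 + x2 + k * x3)^t)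
          = Cc c1 c2 c3 k t * (VV X1 * VV X2 * VV X3)"
    unfolding box_h_split Cc_def using a
    using box_mon[OF assms, of 2 1 0 t k] box_mon[OF assms, of 2 0 1 t k] box_mon[OF assms, of 1 2 0 t k]
      box_mon[OF assms, of 1 0 2 t k] box_mon[OF assms, of 0 2 1 t k] box_mon[OF assms, of 0 1 2 t k]
    by (simp add: algebra_simps)
qed

lemma poly_sum_upto:
  fixes q :: "int poly"
  assumes "degree q \<le> t"
  shows "poly q y = (\<Sum>i\<le>t. coeff q i * y^i)"
proof -
  have "poly q y = (\<Sum>i\<le>degree q. coeff q i * y^i)" by (simp add: poly_altdef)
  also have "\<dots> = (\<Sum>i\<le>t. coeff q i * y^i)"
    by (rule sum.mono_neutral_left) (use assms in \<open>auto simp: coeff_eq_0\<close>)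
  finally show ?thesis .
qed

lemma box_poly:
  assumes "finite X1" "card X1 = Suc c1" "finite X2" "card X2 = Suc c2" "finite X3" "card X3 = Suc c3"
    and "degree q \<le> t" "t + 3 = c1 + c2 + c3"
  shows "box X1 X2 X3 (\<lambda>x1 x2 x3. hh x1 x2 x3 * poly q (x1 + x2 + k * x3))
     = coeff q t * Cc c1 c2 c3 k t * (VV X1 * VV X2 * VV X3)"
proof -
  have "box X1 X2 X3 (\<lambda>x1 x2 x3. hh x1 x2 x3 * poly q (x1 + x2 + k * x3)) =
    box X1 X2 X3 (\<lambda>x1 x2 x3. \<Sum>i\<le>t. coeff q i * (hh x1 x2 x3 * (x1 + x2 + k * x3)^i))"
    unfolding poly_sum_upto[OF assms(7)] by (simp add: sum_distrib_left mult_ac)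
  also have "\<dots> = (\<Sum>i\<le>t. coeff q i * box X1 X2 X3 (\<lambda>x1 x2 x3. hh x1 x2 x3 * (x1 + x2 + k * x3)^i))"
    by (simp add: box_sum box_cmult)
  also have "\<dots> = (\<Sum>i\<le>t. if i = t then coeff q t * (Cc c1 c2 c3 k t * (VV X1 * VV X2 * VV X3)) else 0)"
  proof (rule sum.cong)
    fix i assume "i \<in> {..t}"
    then show "coeff q i * box X1 X2 X3 (\<lambda>x1 x2 x3. hh x1 x2 x3 * (x1 + x2 + k * x3)^i) =
      (if i = t then coeff q t * (Cc c1 c2 c3 k t * (VV X1 * VV X2 * VV X3)) else 0)"
      using box_h[OF assms(1-6), of i k] assms(8) by auto
  qed simp
  also have "\<dots> = coeff q t * Cc c1 c2 c3 k t * (VV X1 * VV X2 * VV X3)" by simp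
  finally show ?thesis .
qed

lemma not_dvd_VV:
  assumes "prime p" "A \<subseteq> {0..<p}" "finite A"
  shows "\<not> int p dvd VV (int ` A)"
proof
  assume "int p dvd VV (int ` A)"
  then obtain x y where xy: "x \<in> int ` A" "y \<in> int ` A - {x}" "int p dvd (x - y)"
    unfolding VV_def phi_def using assms by (auto simp: prime_dvd_prod_iff)
  then have "x - y \<noteq> 0" by auto
  from dvd_imp_le_int[OF this xy(3)] have "int p \<le> \<bar>x - y\<bar>" by simp
  moreover have "\<bar>x - y\<bar> < int p"
  proof -
    obtain a b where "x = int a" "y = int b" "a \<in> A" "b \<in> A" using xy by auto
    moreover have "a < p" "b < p" using calculation assms(2) by auto
    ultimately show ?thesis by auto
  qed
  ultimately show False by simp
qed

lemma lower_bound: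
  fixes p k :: nat and A1 A2 A3 :: "nat set"
  assumes "prime p" "A1 \<subseteq> {0..<p}" "A2 \<subseteq> {0..<p}" "A3 \<subseteq> {0..<p}"
    and "card A1 = Suc c1" "card A2 = Suc c2" "card A3 = Suc c3"
    and "t + 3 = c1 + c2 + c3" "t < p" "\<not> int p dvd Cc c1 c2 c3 (int k) t"
  shows "t + 1 \<le> card {(a1 + a2 + k * a3) mod p | a1 a2 a3.
            a1 \<in> A1 \<and> a2 \<in> A2 \<and> a3 \<in> A3 \<and> a1 \<noteq> a2 \<and> a1 \<noteq> a3 \<and> a2 \<noteq> a3}"
    (is "_ \<le> card ?S")
proof (rule ccontr)
  assume "\<not> t + 1 \<le> card ?S"
  then have cS: "card ?S \<le> t" by simp
  have pp: "p > 0" using assms(1) prime_gt_0_nat by blast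
  have Ssub: "?S \<subseteq> {0..<p}" using pp by auto
  have fS: "finite ?S" using Ssub finite_subset by blast
  have "t - card ?S \<le> card ({0..<p} - ?S)" using assms(9) Ssub fS by (simp add: card_Diff_subset)
  then obtain R where R: "R \<subseteq> {0..<p} - ?S" "card R = t - card ?S" "finite R"
    by (rule obtain_subset_with_card_n)
  define T where "T = ?S \<union> R"
  have T: "?S \<subseteq> T" "finite T" "card T = t"
  proof -
    have "?S \<inter> R = {}" using R by auto
    then have "card (?S \<union> R) = card ?S + card R" using R fS by (simp add: card_Un_disjoint)
    then show "?S \<subseteq> T" "finite T" "card T = t" unfolding T_def using R fS cS by auto
  qed
  define q :: "int poly" where "q = (\<Prod>s\<in>T. [:- int s, 1:])"
  have dq: "degree q = t" unfolding q_def using T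
    by (subst degree_prod_eq_sum_degree) auto
  have "lead_coeff q = 1" unfolding q_def by (simp add: lead_coeff_prod)
  then have cq: "coeff q t = 1" using dq by simp
  have fin: "finite A1" "finite A2" "finite A3" using assms(2-4) finite_subset by blast+
  have inj: "inj_on int X" for X :: "nat set" by (auto simp: inj_on_def)
  have cX: "card (int ` A1) = Suc c1" "card (int ` A2) = Suc c2" "card (int ` A3) = Suc c3"
    using assms(5-7) inj by (simp_all add: card_image)
  have fX: "finite (int ` A1)" "finite (int ` A2)" "finite (int ` A3)" using fin by auto
  have E: "box (int ` A1) (int ` A2) (int ` A3) (\<lambda>x1 x2 x3. hh x1 x2 x3 * poly q (x1 + x2 + int k * x3))
     = Cc c1 c2 c3 (int k) t * (VV (int ` A1) * VV (int ` A2) * VV (int ` A3))"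
    using box_poly[OF fX(1) cX(1) fX(2) cX(2) fX(3) cX(3), of q t "int k"] dq assms(8) cq by simp
  have dv: "int p dvd hh x1 x2 x3 * poly q (x1 + x2 + int k * x3)"
    if "x1 \<in> int ` A1" "x2 \<in> int ` A2" "x3 \<in> int ` A3" for x1 x2 x3
  proof (cases "x1 \<noteq> x2 \<and> x1 \<noteq> x3 \<and> x2 \<noteq> x3")
    case False
    then show ?thesis by auto
  next
    case True
    from that obtain a1 a2 a3 where a: "x1 = int a1" "x2 = int a2" "x3 = int a3" "a1 \<in> A1" "a2 \<in> A2" "a3 \<in> A3"
      by auto
    let ?N = "a1 + a2 + k * a3"
    have "?N mod p \<in> ?S" using True a by auto
    then have sT: "?N mod p \<in> T" using T by auto
    have "poly q (x1 + x2 + int k * x3) = (\<Prod>s\<in>T. (int ?N - int s))"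
      unfolding q_def a by (simp add: poly_prod)
    moreover have "int p dvd (int ?N - int (?N mod p))"
      by (simp add: zmod_int)
    moreover have "(int ?N - int (?N mod p)) dvd (\<Prod>s\<in>T. (int ?N - int s))"
      using T(2) sT by (rule dvd_prodI)
    ultimately show ?thesis by (metis dvd_mult dvd_trans)
  qed
  have "int p dvd box (int ` A1) (int ` A2) (int ` A3) (\<lambda>x1 x2 x3. hh x1 x2 x3 * poly q (x1 + x2 + int k * x3))"
    unfolding box_def by (intro dvd_sum dvd_mult2 dv) auto
  then have "int p dvd Cc c1 c2 c3 (int k) t * (VV (int ` A1) * VV (int ` A2) * VV (int ` A3))"
    using E by simp
  moreover have "prime (int p)" using assms(1) by simp
  ultimately show False
    using assms(10) not_dvd_VV[OF assms(1) assms(2) fin(1)] not_dvd_VV[OF assms(1) assms(3) fin(2)]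
      not_dvd_VV[OF assms(1) assms(4) fin(3)]
    by (simp add: prime_dvd_mult_iff)
qed

definition ff :: "nat \<Rightarrow> nat \<Rightarrow> int" where
  "ff x f = (\<Prod>j<f. int x - int j)"

lemma ff_simps: "ff x 0 = 1" "ff x 1 = int x" "ff x 2 = int x * (int x - 1)"
  by (simp_all add: ff_def numeral_2_eq_2 lessThan_Suc)

lemma ff_zero: "x < f \<Longrightarrow> ff x f = 0"
  unfolding ff_def by (rule prod_zero) auto

lemma fact_ff: "f \<le> 2 \<Longrightarrow> f \<le> x \<Longrightarrow> (fact x :: int) = ff x f * fact (x - f)"
proof -
  assume "f \<le> 2" "f \<le> x"
  then consider "f = 0" | "f = 1" | "f = 2" by linarith
  then show ?thesis
  proof cases
    case 1 then show ?thesis by (simp add: ff_simps)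
  next
    case 2 then show ?thesis using \<open>f \<le> x\<close> by (simp add: ff_def fact_reduce)
  next
    case 3
    then obtain y where y: "x = Suc (Suc y)" using \<open>f \<le> x\<close> by (metis add_2_eq_Suc le_Suc_ex)
    then show ?thesis using 3 by (simp add: ff_simps algebra_simps of_nat_diff)
  qed
qed

lemma tm_fact:
  assumes "f1 \<le> 2" "f2 \<le> 2" "f3 \<le> 2" "f1 + f2 + f3 = 3" "t + 3 = a + b + c"
  shows "tm a b c k t f1 f2 f3 * fact a * fact b * fact c = fact t * ff a f1 * ff b f2 * ff c f3 * k^(c-f3)"
proof (cases "f1 \<le> a \<and> f2 \<le> b \<and> f3 \<le> c")
  case False
  then show ?thesis unfolding tm_def using ff_zero[of a f1] ff_zero[of b f2] ff_zero[of c f3] by auto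
next
  case True
  let ?L = "c - f3" and ?I = "a - f1"
  have L: "?L \<le> t" and I: "?I \<le> t - ?L" and R: "t - ?L - ?I = b - f2" using True assms by linarith+
  have b1: "fact ?L * fact (t - ?L) * (t choose ?L) = (fact t :: nat)" by (rule binomial_fact_lemma[OF L])
  have b2: "fact ?I * fact (t - ?L - ?I) * ((t - ?L) choose ?I) = (fact (t - ?L) :: nat)"
    by (rule binomial_fact_lemma[OF I])
  have e1: "int ((t choose ?L) * ((t - ?L) choose ?I)) * fact (c - f3) * fact (a - f1) * fact (b - f2) = (fact t :: int)"
  proof -
    have "(t choose ?L) * ((t - ?L) choose ?I) * fact (c - f3) * fact (a - f1) * fact (b - f2)
        = (fact ?L * fact (t - ?L) * (t choose ?L))" unfolding b2[symmetric] R by (simp only: mult_ac)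
    also have "\<dots> = fact t" by (rule b1)
    finally have "(t choose ?L) * ((t - ?L) choose ?I) * fact (c - f3) * fact (a - f1) * fact (b - f2) = (fact t :: nat)" .
    then have "int ((t choose ?L) * ((t - ?L) choose ?I) * fact (c - f3) * fact (a - f1) * fact (b - f2)) = int (fact t)"
      by (rule arg_cong)
    then show ?thesis by (simp only: of_nat_mult of_nat_fact)
  qed
  have e2: "(fact a :: int) = ff a f1 * fact (a - f1)" "(fact b :: int) = ff b f2 * fact (b - f2)"
    "(fact c :: int) = ff c f3 * fact (c - f3)" using fact_ff True assms by auto
  have "int ((t choose ?L) * ((t - ?L) choose ?I)) * k^?L * fact a * fact b * fact c
     = (int ((t choose ?L) * ((t - ?L) choose ?I)) * fact (c - f3) * fact (a - f1) * fact (b - f2))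
        * ff a f1 * ff b f2 * ff c f3 * k^?L"
    unfolding e2 by (simp only: mult_ac)
  also have "\<dots> = fact t * ff a f1 * ff b f2 * ff c f3 * k^?L" unfolding e1 ..
  finally show ?thesis unfolding tm_def using True by simp
qed

lemma Cc_fact:
  assumes "t + 3 = a + b + c" "2 \<le> c"
  shows "Cc a b c k t * fact a * fact b * fact c =
    fact t * k^(c-2) * (int a - int b) * (k^2 * int a * int b - k * int c * (int a + int b - 1) + int c * (int c - 1))"
proof -
  let ?F = "fact a * fact b * fact c :: int"
  have T: "tm a b c k t f1 f2 f3 * ?F = fact t * ff a f1 * ff b f2 * ff c f3 * k^(c-2) * k^(2-f3)"
    if "f1 \<le> 2" "f2 \<le> 2" "f3 \<le> 2" "f1 + f2 + f3 = 3" for f1 f2 f3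
  proof -
    have "c - f3 = (c-2) + (2-f3)" using that assms(2) by linarith
    then have "k^(c-f3) = k^(c-2) * k^(2-f3)" by (metis power_add)
    then show ?thesis using tm_fact[OF that assms(1), of k] by (simp add: mult.assoc)
  qed
  have ffs: "ff x (Suc 0) = int x" "ff x 0 = 1" "ff x 2 = int x * (int x - 1)" for x
    using ff_simps by simp_all
  have t1: "tm a b c k t 2 1 0 * ?F = fact t * (int a * (int a - 1)) * int b * 1 * k^(c-2) * k^2"
    using T[of 2 1 0] by (simp add: ffs)
  have t2: "tm a b c k t 2 0 1 * ?F = fact t * (int a * (int a - 1)) * 1 * int c * k^(c-2) * k"
    using T[of 2 0 1] by (simp add: ffs)
  have t3: "tm a b c k t 1 2 0 * ?F = fact t * int a * (int b * (int b - 1)) * 1 * k^(c-2) * k^2"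
    using T[of 1 2 0] by (simp add: ffs)
  have t4: "tm a b c k t 1 0 2 * ?F = fact t * int a * 1 * (int c * (int c - 1)) * k^(c-2)"
    using T[of 1 0 2] by (simp add: ffs)
  have t5: "tm a b c k t 0 2 1 * ?F = fact t * 1 * (int b * (int b - 1)) * int c * k^(c-2) * k"
    using T[of 0 2 1] by (simp add: ffs)
  have t6: "tm a b c k t 0 1 2 * ?F = fact t * 1 * int b * (int c * (int c - 1)) * k^(c-2)"
    using T[of 0 1 2] by (simp add: ffs)
  have "Cc a b c k t * ?F = tm a b c k t 2 1 0 * ?F - tm a b c k t 2 0 1 * ?F - tm a b c k t 1 2 0 * ?F
     + tm a b c k t 1 0 2 * ?F + tm a b c k t 0 2 1 * ?F - tm a b c k t 0 1 2 * ?F"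
    unfolding Cc_def by (simp add: algebra_simps)
  also have "\<dots> = fact t * k^(c-2) * (int a - int b) * (k^2 * int a * int b - k * int c * (int a + int b - 1) + int c * (int c - 1))"
    unfolding t1 t2 t3 t4 t5 t6 by algebra
  finally show ?thesis by (simp add: mult.assoc)
qed

definition QQ :: "int \<Rightarrow> int \<Rightarrow> int \<Rightarrow> int \<Rightarrow> int" where
  "QQ k a b c = k^2 * a * b - k * c * (a + b - 1) + c * (c - 1)"

lemma Cc_ndvd:
  assumes "prime p" "t + 3 = a + b + c" "2 \<le> c" "t < p" "\<not> int p dvd k"
    "\<not> int p dvd (int a - int b)" "\<not> int p dvd QQ k (int a) (int b) (int c)"
  shows "\<not> int p dvd Cc a b c k t"
proof
  assume "int p dvd Cc a b c k t"
  then have "int p dvd Cc a b c k t * fact a * fact b * fact c" by simp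
  then have d: "int p dvd fact t * k^(c-2) * (int a - int b) * QQ k (int a) (int b) (int c)"
    unfolding Cc_fact[OF assms(2,3)] QQ_def .
  have pr: "prime (int p)" using assms(1) by simp
  have "\<not> int p dvd fact t"
  proof
    assume "int p dvd fact t"
    then have "int p dvd int (fact t)" by (simp add: of_nat_fact)
    then have "p dvd fact t" by (simp only: of_nat_dvd_iff)
    then show False using prime_dvd_fact_iff[OF assms(1)] assms(4) by simp
  qed
  moreover have "\<not> int p dvd k^(c-2)" using assms(5) pr prime_dvd_power by blast
  ultimately show False using d pr assms(6,7) by (simp add: prime_dvd_mult_iff)
qed

lemma main_bound:
  fixes p k :: nat and A :: "nat set"
  assumes "prime p" "A \<subseteq> {0..<p}" "a + 1 \<le> card A" "b + 1 \<le> card A" "c + 1 \<le> card A"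
    "t + 3 = a + b + c" "t < p" "2 \<le> c" "\<not> int p dvd int k"
    "\<not> int p dvd (int a - int b)" "\<not> int p dvd QQ (int k) (int a) (int b) (int c)"
  shows "t + 1 \<le> card (Sk p k A)"
proof -
  obtain A1 where A1: "A1 \<subseteq> A" "card A1 = Suc a" using assms(3) obtain_subset_with_card_n by (metis Suc_eq_plus1)
  obtain A2 where A2: "A2 \<subseteq> A" "card A2 = Suc b" using assms(4) obtain_subset_with_card_n by (metis Suc_eq_plus1)
  obtain A3 where A3: "A3 \<subseteq> A" "card A3 = Suc c" using assms(5) obtain_subset_with_card_n by (metis Suc_eq_plus1)
  have nd: "\<not> int p dvd Cc a b c (int k) t" by (rule Cc_ndvd[OF assms(1,6,8,7,9,10,11)])
  have "t + 1 \<le> card {(a1 + a2 + k * a3) mod p | a1 a2 a3.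
            a1 \<in> A1 \<and> a2 \<in> A2 \<and> a3 \<in> A3 \<and> a1 \<noteq> a2 \<and> a1 \<noteq> a3 \<and> a2 \<noteq> a3}"
    using lower_bound[OF assms(1) _ _ _ A1(2) A2(2) A3(2) assms(6,7) nd] A1(1) A2(1) A3(1) assms(2) by blast
  also have "\<dots> \<le> card (Sk p k A)"
  proof (rule card_mono)
    have pp: "p > 0" using assms(1) prime_gt_0_nat by blast
    have "Sk p k A \<subseteq> {0..<p}" unfolding Sk_def using pp by auto
    then show "finite (Sk p k A)" using finite_subset by blast
    show "{(a1 + a2 + k * a3) mod p | a1 a2 a3.
            a1 \<in> A1 \<and> a2 \<in> A2 \<and> a3 \<in> A3 \<and> a1 \<noteq> a2 \<and> a1 \<noteq> a3 \<and> a2 \<noteq> a3} \<subseteq> Sk p k A"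
      unfolding Sk_def using A1(1) A2(1) A3(1) by blast
  qed
  finally show ?thesis .
qed

lemma ndvd_small: "0 < x \<Longrightarrow> x < int p \<Longrightarrow> \<not> int p dvd x"
  using zdvd_imp_le by fastforce

lemma part_i_gen:
  fixes p k n :: nat and A :: "nat set"
  assumes "prime p" "A \<subseteq> {0..<p}" "3 \<le> k" "k \<le> p - 1" "3 \<le> n" "n \<le> card A" "3 * n \<le> p + 6"
  shows "3 * n - 6 \<le> card (Sk p k A)"
proof -
  have p2: "p \<ge> 2" using assms(1) prime_ge_2_nat by blast
  then have p5: "p \<ge> 4" using assms(3,4) by linarith
  have pr: "prime (int p)" using assms(1) by simp
  have Q: "QQ (int k) (int (n-1)) (int (n-2)) (int (n-1)) = (int n - 1) * (int n - 2) * (int k - 1)^2"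
    using assms(5) by (simp add: QQ_def of_nat_diff algebra_simps power2_eq_square)
  have nk: "\<not> int p dvd int k" by (rule ndvd_small) (use assms(3,4) p2 in auto)
  have n1: "\<not> int p dvd (int n - 1)" by (rule ndvd_small) (use assms(5,7) p5 in auto)
  have n2: "\<not> int p dvd (int n - 2)" by (rule ndvd_small) (use assms(5,7) p5 in auto)
  have k1: "\<not> int p dvd (int k - 1)" by (rule ndvd_small) (use assms(3,4) p2 in auto)
  have nQ: "\<not> int p dvd QQ (int k) (int (n-1)) (int (n-2)) (int (n-1))"
    unfolding Q using n1 n2 k1 pr by (simp add: prime_dvd_mult_iff prime_dvd_power_iff)
  have nab: "\<not> int p dvd (int (n-1) - int (n-2))" using assms(5) p2 by (simp add: of_nat_diff)
  have "3 * n - 7 + 1 \<le> card (Sk p k A)"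
    by (rule main_bound[OF assms(1,2), of "n-1" "n-2" "n-1"]) (use assms(5,6,7) p5 nk nab nQ in auto)
  then show ?thesis using assms(5) by linarith
qed

lemma Q_d1:
  fixes k a b c p :: int
  assumes "a = b + 1" "p = 2 * b + c - 1"
  shows "4 * QQ k a b c = (c - 1) * (c * (k + 2)^2 - 3 * k^2) + p * (k^2 * (p + 4 - 2 * c) - 4 * k * c)"
  unfolding QQ_def assms by (simp add: algebra_simps power2_eq_square)

lemma Q_d2:
  fixes k a b c p :: int
  assumes "a = b + 2" "p = 2 * b + c"
  shows "4 * QQ k a b c = c * (c * (k + 2)^2 - 4 * (k^2 + k + 1)) + p * (k^2 * (p + 4 - 2 * c) - 4 * k * c)"
  unfolding QQ_def assms by (simp add: algebra_simps power2_eq_square)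

lemma finish_iii:
  assumes "prime p" "A \<subseteq> {0..<p}" "p \<le> card (Sk p k A)"
  shows "Sk p k A = {0..<p}"
proof -
  have pp: "p > 0" using assms(1) prime_gt_0_nat by blast
  have "Sk p k A \<subseteq> {0..<p}" unfolding Sk_def using pp by auto
  moreover have "card (Sk p k A) = card {0..<p}"
    using assms(3) card_mono[OF _ calculation] by simp
  ultimately show ?thesis by (simp add: card_subset_eq)
qed

lemma iii_d1:
  fixes p k c M :: nat and A :: "nat set"
  assumes "prime p" "odd p" "A \<subseteq> {0..<p}" "card A = M + 1" "even c" "2 \<le> c" "c \<le> M" "p + 3 \<le> 2 * M + c"
    "M < p" "\<not> int p dvd int k" "\<not> int p dvd (int c * (int k + 2)^2 - 3 * (int k)^2)"
  shows "Sk p k A = {0..<p}"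
proof -
  define a where "a = (p + 3 - c) div 2"
  define b where "b = a - 1"
  have ev: "even (p + 3 - c)" using assms(2,5,7,9) by simp
  have a2: "2 * a = p + 3 - c" unfolding a_def using ev by simp
  have ab: "2 * a = p + 3 - c" "a \<ge> 1" "a = b + 1" "a + b + c = p + 2" "a \<le> M"
    using a2 assms(7,8,9) unfolding b_def by linarith+
  have pr: "prime (int p)" using assms(1) by simp
  have R: "4 * QQ (int k) (int a) (int b) (int c) = (int c - 1) * (int c * (int k + 2)^2 - 3 * (int k)^2)
      + int p * ((int k)^2 * (int p + 4 - 2 * int c) - 4 * int k * int c)"
    by (rule Q_d1) (use ab in auto)
  have c1: "\<not> int p dvd (int c - 1)" by (rule ndvd_small) (use assms(6,7,9) in auto)
  have nQ: "\<not> int p dvd QQ (int k) (int a) (int b) (int c)"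
  proof
    assume "int p dvd QQ (int k) (int a) (int b) (int c)"
    then have "int p dvd 4 * QQ (int k) (int a) (int b) (int c)" by simp
    then have "int p dvd (int c - 1) * (int c * (int k + 2)^2 - 3 * (int k)^2)"
      unfolding R by (simp add: dvd_add_left_iff)
    then show False using c1 assms(11) pr by (simp add: prime_dvd_mult_iff)
  qed
  have "int a - int b = 1" using ab by simp
  then have nab: "\<not> int p dvd (int a - int b)" using ndvd_small[of 1 p] prime_gt_1_nat[OF assms(1)] by simp
  have "p - 1 + 1 \<le> card (Sk p k A)"
  proof (rule main_bound[OF assms(1,3), of a b c])
    show "a + 1 \<le> card A" "b + 1 \<le> card A" "c + 1 \<le> card A" using ab assms(4,7) by linarith+
    show "p - 1 + 3 = a + b + c" using ab assms(9) by linarith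
  qed (use assms(6,10) nab nQ prime_gt_1_nat[OF assms(1)] in auto)
  then show ?thesis using finish_iii[OF assms(1,3)] by simp
qed

lemma iii_d2:
  fixes p k c M :: nat and A :: "nat set"
  assumes "prime p" "odd p" "A \<subseteq> {0..<p}" "card A = M + 1" "odd c" "3 \<le> c" "c \<le> M" "p + 4 \<le> 2 * M + c"
    "M < p" "\<not> int p dvd int k" "\<not> int p dvd (int c * (int k + 2)^2 - 4 * ((int k)^2 + int k + 1))"
  shows "Sk p k A = {0..<p}"
proof -
  define a where "a = (p + 4 - c) div 2"
  define b where "b = a - 2"
  have ev: "even (p + 4 - c)" using assms(2,5,7,9) by simp
  have a2: "2 * a = p + 4 - c" unfolding a_def using ev by simp
  have ab: "a \<ge> 2" "a = b + 2" "a + b + c = p + 2" "a \<le> M"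
    using a2 assms(7,8,9) unfolding b_def by linarith+
  have pr: "prime (int p)" using assms(1) by simp
  have R: "4 * QQ (int k) (int a) (int b) (int c) = int c * (int c * (int k + 2)^2 - 4 * ((int k)^2 + int k + 1))
      + int p * ((int k)^2 * (int p + 4 - 2 * int c) - 4 * int k * int c)"
    by (rule Q_d2) (use ab in auto)
  have c1: "\<not> int p dvd int c" by (rule ndvd_small) (use assms(6,7,9) in auto)
  have nQ: "\<not> int p dvd QQ (int k) (int a) (int b) (int c)"
  proof
    assume "int p dvd QQ (int k) (int a) (int b) (int c)"
    then have "int p dvd 4 * QQ (int k) (int a) (int b) (int c)" by simp
    then have "int p dvd int c * (int c * (int k + 2)^2 - 4 * ((int k)^2 + int k + 1))"
      unfolding R by (simp add: dvd_add_left_iff)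
    then show False using c1 assms(11) pr by (simp add: prime_dvd_mult_iff)
  qed
  have p3: "p \<ge> 3" using assms(1,2) prime_ge_2_nat[OF assms(1)] by (metis dvd_refl le_antisym not_less_eq_eq numeral_2_eq_2 numeral_3_eq_3 odd_two_times_div_two_succ) 
  have "int a - int b = 2" using ab by simp
  then have nab: "\<not> int p dvd (int a - int b)" using ndvd_small[of 2 p] p3 by simp
  have "p - 1 + 1 \<le> card (Sk p k A)"
  proof (rule main_bound[OF assms(1,3), of a b c])
    show "a + 1 \<le> card A" "b + 1 \<le> card A" "c + 1 \<le> card A" using ab assms(4,7) by linarith+
    show "p - 1 + 3 = a + b + c" using ab assms(9) by linarith
  qed (use assms(6,10) nab nQ prime_gt_1_nat[OF assms(1)] in auto)
  then show ?thesis using finish_iii[OF assms(1,3)] by simp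
qed

lemma pick1:
  fixes c k :: int and p :: nat
  assumes "prime p" "p \<ge> 5" "\<not> int p dvd k"
    "int p dvd (c * (k + 2)^2 - 3 * k^2)" "int p dvd ((c + 2) * (k + 2)^2 - 3 * k^2)"
  shows False
proof -
  have pr: "prime (int p)" using assms(1) by simp
  have "int p dvd ((c + 2) * (k + 2)^2 - 3 * k^2) - (c * (k + 2)^2 - 3 * k^2)"
    using assms(5,4) by (rule dvd_diff)
  then have "int p dvd 2 * (k + 2)^2" by (simp add: algebra_simps)
  moreover have "\<not> int p dvd 2" by (rule ndvd_small) (use assms(2) in auto)
  ultimately have "int p dvd (k + 2)" using pr by (simp add: prime_dvd_mult_iff prime_dvd_power_iff)
  then have "int p dvd c * (k + 2)^2" by (simp add: power2_eq_square)
  from dvd_diff[OF this assms(4)] have "int p dvd 3 * k^2" by simp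
  moreover have "\<not> int p dvd 3" by (rule ndvd_small) (use assms(2) in auto)
  ultimately show False using pr assms(3) by (simp add: prime_dvd_mult_iff prime_dvd_power_iff)
qed

lemma pick2:
  fixes c k :: int and p :: nat
  assumes "prime p" "p \<ge> 5"
    "int p dvd (c * (k + 2)^2 - 4 * (k^2 + k + 1))" "int p dvd ((c + 2) * (k + 2)^2 - 4 * (k^2 + k + 1))"
  shows False
proof -
  have pr: "prime (int p)" using assms(1) by simp
  have "int p dvd ((c + 2) * (k + 2)^2 - 4 * (k^2 + k + 1)) - (c * (k + 2)^2 - 4 * (k^2 + k + 1))"
    using assms(4,3) by (rule dvd_diff)
  then have "int p dvd 2 * (k + 2)^2" by (simp add: algebra_simps)
  moreover have "\<not> int p dvd 2" by (rule ndvd_small) (use assms(2) in auto)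
  ultimately have kp: "int p dvd (k + 2)" using pr by (simp add: prime_dvd_mult_iff prime_dvd_power_iff)
  then have "int p dvd c * (k + 2)^2" by (simp add: power2_eq_square)
  from dvd_diff[OF this assms(3)] have d1: "int p dvd 4 * (k^2 + k + 1)" by (simp add: add.assoc)
  have "int p dvd 4 * (k + 2) * (k - 1)" using kp by (metis dvd_mult dvd_mult2 mult.assoc)
  then have "int p dvd 4 * (k^2 + k + 1) - 4 * (k + 2) * (k - 1)" using d1 by (simp add: dvd_diff)
  then have "int p dvd 12" by (simp add: algebra_simps power2_eq_square)
  then have "p dvd 12" by (metis of_nat_dvd_iff of_nat_numeral)
  then have "p \<le> 12" by (simp add: dvd_imp_le)
  moreover have "p \<noteq> 5 \<and> p \<noteq> 7 \<and> p \<noteq> 8 \<and> p \<noteq> 9 \<and> p \<noteq> 10 \<and> p \<noteq> 11" using \<open>p dvd 12\<close> by auto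
  moreover have "p \<noteq> 12" "p \<noteq> 6" using assms(1) by auto
  ultimately show False using assms(2) by linarith
qed

lemma part_iii:
  fixes p k :: nat and A :: "nat set"
  assumes "prime p" "A \<subseteq> {0..<p}" "3 \<le> k" "k \<le> p - 1" "3 * card A \<ge> p + 8"
  shows "Sk p k A = {0..<p}"
proof -
  have p2: "p \<ge> 2" using assms(1) prime_ge_2_nat by blast
  have p4: "p \<ge> 4" using assms(3,4) p2 by linarith
  have "p \<noteq> 4" using assms(1) by auto
  then have p5: "p \<ge> 5" using p4 by linarith
  have odd: "odd p" using assms(1) p5 by (simp add: prime_odd_nat)
  have cA: "card A \<le> p" using card_mono[OF _ assms(2)] by simp
  define M where "M = card A - 1"
  have M: "card A = M + 1" "M < p" "p + 5 \<le> 3 * M" using assms(5) cA p5 unfolding M_def by linarith+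
  have nk: "\<not> int p dvd int k" by (rule ndvd_small) (use assms(3,4) p2 in auto)
  show ?thesis
  proof (cases "even M")
    case True
    define c where "c = M - 2"
    have c: "even c" "2 \<le> c" "c + 2 = M" "p + 3 \<le> 2 * M + c" using True M p5 unfolding c_def by auto
    show ?thesis
    proof (cases "int p dvd (int c * (int k + 2)^2 - 3 * (int k)^2)")
      case True
      have nd: "\<not> int p dvd (int (c + 2) * (int k + 2)^2 - 3 * (int k)^2)"
        using pick1[OF assms(1) p5 nk True] by (simp add: add.commute) blast
      show ?thesis
        by (rule iii_d1[OF assms(1) odd assms(2) M(1) _ _ _ _ M(2) nk nd]) (use c in auto)
    next
      case False
      show ?thesis
        by (rule iii_d1[OF assms(1) odd assms(2) M(1) _ _ _ _ M(2) nk False]) (use c in auto)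
    qed
  next
    case False
    define c where "c = M - 2"
    have "3 * M \<noteq> p + 5" using False odd by presburger
    then have c: "odd c" "3 \<le> c" "c + 2 = M" "p + 4 \<le> 2 * M + c" using False M p5 unfolding c_def by auto presburger+
    show ?thesis
    proof (cases "int p dvd (int c * (int k + 2)^2 - 4 * ((int k)^2 + int k + 1))")
      case True
      have nd: "\<not> int p dvd (int (c + 2) * (int k + 2)^2 - 4 * ((int k)^2 + int k + 1))"
        using pick2[OF assms(1) p5 True] by (simp add: add.commute) blast
      show ?thesis
        by (rule iii_d2[OF assms(1) odd assms(2) M(1) _ _ _ _ M(2) nk nd]) (use c in auto)
    next
      case False
      show ?thesis
        by (rule iii_d2[OF assms(1) odd assms(2) M(1) _ _ _ _ M(2) nk False]) (use c in auto)
    qed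
  qed
qed

theorem mainTheorem9:
  fixes p k :: nat and A :: "nat set"
  assumes "prime p" and "3 \<le> k" and "k \<le> p - 1"
    and "A \<subseteq> {0..<p}" and "card A \<ge> k + 2"
  shows "(3 * card A \<le> p + 6 \<longrightarrow> card (Sk p k A) \<ge> 3 * card A - 6)
       \<and> (3 * card A = p + 7 \<longrightarrow> card (Sk p k A) \<ge> p - 2)
       \<and> (3 * card A \<ge> p + 8 \<longrightarrow> Sk p k A = {0..<p})"
proof (intro conjI impI)
  assume "3 * card A \<le> p + 6"
  then show "card (Sk p k A) \<ge> 3 * card A - 6"
    using part_i_gen[OF assms(1,4,2,3), of "card A"] assms(2,5) by simp
next
  assume a: "3 * card A = p + 7"
  have "3 * (card A - 1) - 6 \<le> card (Sk p k A)"
    by (rule part_i_gen[OF assms(1,4,2,3)]) (use a assms(2,5) in auto)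
  then show "card (Sk p k A) \<ge> p - 2" using a by linarith
next
  assume "3 * card A \<ge> p + 8"
  then show "Sk p k A = {0..<p}" by (rule part_iii[OF assms(1,4,2,3)])
qed
end
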